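(* Let $(V_n)_{n\ge1}$ be a sequence in $\mathcal{V}$ with $M:=\limsup_{n\to\infty}\mathcal{L}_{V_n}(0)>0$. Then $(\mathcal{L}_{V_n})_{n\ge1}$ has a pre-cutoff if and only if $(\mathcal{L}_{V_n})_{n\ge1}$ has a cutoff.
   Context: $\mathcal{V}$ denotes the class of all non-decreasing, right-continuous functions $V:(0,\infty)\to\mathbb{R}$ with $\lim_{\lambda\to0^+}V(\lambda)=0$ and $\lim_{\lambda\to\infty}V(\lambda)<\infty$; for $V\in\mathcal{V}$, $\mathcal{L}_V(t)=\int_{(0,\infty)}e^{-t\lambda}dV(\lambda)$ ($t\ge0$, Lebesgue–Stieltjes integral). With $M=\limsup_n\mathcal{L}_{V_n}(0)>0$: the sequence $(\mathcal{L}_{V_n})$ has a pre-cutoff if there exist $t_n>0$ and constants $0<A<B$ with $\lim_n\mathcal{L}_{V_n}(Bt_n)=0$ and $\liminf_n\mathcal{L}_{V_n}(At_n)>0$; it has a cutoff if there exist $t_n>0$ with $\lim_n\mathcal{L}_{V_n}(at_n)=0$ for all $a>1$ and $\lim_n\mathcal{L}_{V_n}(at_n)=M$ for all $0<a<1$ (such $t_n$ is a cutoff time). *)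

theory Defs
  imports "HOL-Analysis.Analysis"
begin

text \<open>The class V: non-decreasing, right-continuous functions on (0,oo),
  tending to 0 at 0+ and having a finite limit at infinity.
  Functions are of type real => real; only values on (0,oo) matter.\<close>
definition classV :: "(real \<Rightarrow> real) \<Rightarrow> bool" where
  "classV V \<longleftrightarrow>
     mono_on {0<..} V \<and>
     (\<forall>x>0. continuous (at_right x) V) \<and>
     (V \<longlongrightarrow> 0) (at_right 0) \<and>
     (\<exists>L. (V \<longlongrightarrow> L) at_top)"

text \<open>Extension of V by 0 on (-oo,0]; this is monotone and right-continuous on R
  whenever V is in the class, so its Lebesgue--Stieltjes measure is interval_measure.\<close>
definition extV :: "(real \<Rightarrow> real) \<Rightarrow> real \<Rightarrow> real" where
  "extV V x = (if 0 < x then V x else 0)"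

definition LT :: "(real \<Rightarrow> real) \<Rightarrow> real \<Rightarrow> real" where
  "LT V t = (LINT x:{0<..}|interval_measure (extV V). exp (- t * x))"

definition pre_cutoff :: "(nat \<Rightarrow> real \<Rightarrow> real) \<Rightarrow> bool" where
  "pre_cutoff V \<longleftrightarrow> (\<exists>t A B. (\<forall>n. 0 < t n) \<and> 0 < A \<and> A < B \<and>
      (\<lambda>n. LT (V n) (B * t n)) \<longlonglongrightarrow> 0 \<and>
      liminf (\<lambda>n. ereal (LT (V n) (A * t n))) > 0)"

definition cutoff :: "(nat \<Rightarrow> real \<Rightarrow> real) \<Rightarrow> bool" where
  "cutoff V \<longleftrightarrow> (\<exists>t. (\<forall>n. 0 < t n) \<and>
      (\<forall>a>1. (\<lambda>n. LT (V n) (a * t n)) \<longlonglongrightarrow> 0) \<and>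
      (\<forall>a. 0 < a \<and> a < 1 \<longrightarrow>
         (\<lambda>n. ereal (LT (V n) (a * t n))) \<longlonglongrightarrow> limsup (\<lambda>n. ereal (LT (V n) 0))))"

end

theory Submission imports Defs begin
lemma powr_le_R:
  fixes x R th :: real
  assumes "0 \<le> x" "x \<le> R" "1 \<le> R" "0 \<le> th" "th \<le> 1"
  shows "x powr th \<le> R"
proof (cases "x \<le> 1")
  case True
  then have "x powr th \<le> 1" using powr_le1 assms by simp
  then show ?thesis using assms by linarith
next
  case False
  then have "x powr th \<le> x powr 1" using powr_mono[of th 1 x] assms by simp
  then show ?thesis using assms False by simp
qed

lemma blowup:
  fixes g h :: "nat \<Rightarrow> real"
  assumes g0: "g \<longlonglongrightarrow> 0" and gnn: "eventually (\<lambda>n. 0 \<le> g n) sequentially"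
    and hnn: "eventually (\<lambda>n. 0 \<le> h n) sequentially" and k: "0 < k" and c: "0 < c"
    and ev: "eventually (\<lambda>n. \<exists>th. 0 \<le> th \<and> th \<le> 1 \<and> c \<le> h n powr th * g n powr k) sequentially"
  shows "filterlim h at_top sequentially"
proof (subst filterlim_at_top, intro allI)
  fix Z :: real
  define R where "R = max Z 1"
  have R1: "1 \<le> R" and RZ: "Z \<le> R" unfolding R_def by auto
  have "(\<lambda>n. g n powr k) \<longlonglongrightarrow> 0"
    by (rule tendsto_zero_powrI[OF g0 tendsto_const gnn k])
  moreover have "0 < c / R" using c R1 by simp
  ultimately have e1: "eventually (\<lambda>n. g n powr k < c / R) sequentially"
    by (rule order_tendstoD(2))
  show "eventually (\<lambda>n. Z \<le> h n) sequentially"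
    using e1 ev hnn
  proof eventually_elim
    case (elim n)
    then obtain th where th: "0 \<le> th" "th \<le> 1" "c \<le> h n powr th * g n powr k" by blast
    show ?case
    proof (rule ccontr)
      assume "\<not> Z \<le> h n"
      then have "h n \<le> R" using RZ by linarith
      then have "h n powr th \<le> R" using powr_le_R elim th R1 by blast
      moreover have "0 \<le> g n powr k" by simp
      ultimately have "h n powr th * g n powr k \<le> R * g n powr k"
        by (simp add: mult_right_mono)
      also have "\<dots> < R * (c / R)" using elim R1 by (intro mult_strict_left_mono) auto
      also have "\<dots> = c" using R1 by simp
      finally show False using th by simp
    qed
  qed
qed

lemma abstract_main:
  fixes f :: "nat \<Rightarrow> real \<Rightarrow> real" and t :: "nat \<Rightarrow> real"
  assumes nonneg: "\<And>n s. 0 \<le> s \<Longrightarrow> 0 \<le> f n s"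
    and anti: "\<And>n s s'. 0 \<le> s \<Longrightarrow> s \<le> s' \<Longrightarrow> f n s' \<le> f n s"
    and lc: "\<And>n s1 s2 th. 0 \<le> s1 \<Longrightarrow> 0 \<le> s2 \<Longrightarrow> 0 < th \<Longrightarrow> th < 1 \<Longrightarrow>
       f n (th * s1 + (1 - th) * s2) \<le> f n s1 powr th * f n s2 powr (1 - th)"
    and tpos: "\<And>n. 0 < t n" and A0: "0 < A" and AB: "A < B"
    and limB: "(\<lambda>n. f n (B * t n)) \<longlonglongrightarrow> 0"
    and c: "0 < c" and evc: "eventually (\<lambda>n. c \<le> f n (A * t n)) sequentially"
  shows "\<exists>t'. (\<forall>n. 0 < t' n) \<and> (\<forall>a>1. (\<lambda>n. f n (a * t' n)) \<longlonglongrightarrow> 0) \<and>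
     (\<forall>a. 0 < a \<and> a < 1 \<longrightarrow> filterlim (\<lambda>n. f n (a * t' n)) at_top sequentially)"
proof -
  have lc': "f n (x * t n) \<le> f n (s1 * t n) powr th * f n (s2 * t n) powr (1 - th)"
    if "0 \<le> s1" "0 \<le> s2" "0 < th" "th < 1" "x = th * s1 + (1 - th) * s2" for n s1 s2 x th
  proof -
    have "x * t n = th * (s1 * t n) + (1 - th) * (s2 * t n)" unfolding that(5) by (simp add: algebra_simps)
    moreover have "0 \<le> s1 * t n" "0 \<le> s2 * t n" using that tpos[of n] by auto
    ultimately show ?thesis using lc[of "s1 * t n" "s2 * t n" th n] that by simp
  qed
  have Bpos: "0 < B" using A0 AB by simp
  have fB_nn: "eventually (\<lambda>n. 0 \<le> f n (B * t n)) sequentially"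
    using nonneg tpos Bpos by (simp add: less_imp_le)
  define th0 where "th0 = (B - A) / (B - A / 2)"
  have th0: "0 < th0" "th0 < 1" using A0 AB unfolding th0_def by (auto simp: field_simps)
  have "th0 * (B - A / 2) = B - A" using A0 AB unfolding th0_def by simp
  then have th0eq: "A = th0 * (A / 2) + (1 - th0) * B" by (simp add: algebra_simps)
  have "filterlim (\<lambda>n. f n (A / 2 * t n)) at_top sequentially"
  proof (rule blowup[OF limB fB_nn _ _ c])
    show "eventually (\<lambda>n. 0 \<le> f n (A / 2 * t n)) sequentially"
      using nonneg tpos A0 by (simp add: less_imp_le)
    show "0 < 1 - th0" using th0 by simp
    show "eventually (\<lambda>n. \<exists>th\<ge>0. th \<le> 1 \<and> c \<le> f n (A / 2 * t n) powr th * f n (B * t n) powr (1 - th0)) sequentially"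
      using evc
    proof eventually_elim
      case (elim n)
      have "c \<le> f n (A / 2 * t n) powr th0 * f n (B * t n) powr (1 - th0)"
        using elim lc'[OF _ _ th0 th0eq, of n] A0 Bpos by simp
      then show ?case using th0 by (intro exI[of _ th0]) simp
    qed
  qed
  then have E1: "eventually (\<lambda>n. 1 \<le> f n (A / 2 * t n)) sequentially"
    by (simp add: filterlim_at_top)
  have E2: "eventually (\<lambda>n. f n (B * t n) < 1) sequentially"
    using limB by (rule order_tendstoD(2)) simp
  define S where "S n = {A / 2} \<union> {x \<in> {A / 2..B}. 1 \<le> f n (x * t n)}" for n
  define cc where "cc n = Sup (S n)" for n
  have bddS: "bdd_above (S n)" for n unfolding S_def using AB by (auto intro: bdd_aboveI[of _ B])
  have cc_lo: "A / 2 \<le> cc n" for n unfolding cc_def by (rule cSup_upper[OF _ bddS]) (simp add: S_def)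
  have cc_hi: "cc n \<le> B" for n unfolding cc_def by (rule cSup_least) (use AB A0 in \<open>auto simp: S_def\<close>)
  have ccpos: "0 < cc n" for n using cc_lo[of n] A0 by linarith
  have below: "1 \<le> f n (x * t n)" if "1 \<le> f n (A / 2 * t n)" "0 \<le> x" "x < cc n" for n x
  proof -
    have "S n \<noteq> {}" by (simp add: S_def)
    then have "\<exists>y\<in>S n. x < y" using that(3) less_cSup_iff[OF _ bddS, of n x] unfolding cc_def by blast
    then obtain y where y: "y \<in> S n" "x < y" by blast
    have "1 \<le> f n (y * t n)" using y that(1) by (auto simp: S_def)
    moreover have "f n (y * t n) \<le> f n (x * t n)"
      using anti[of "x * t n" "y * t n" n] that y tpos[of n] by (simp add: less_imp_le)
    ultimately show ?thesis by linarith
  qed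
  have above: "f n (x * t n) < 1" if "f n (B * t n) < 1" "cc n < x" for n x
  proof (cases "x \<le> B")
    case True
    show ?thesis
    proof (rule ccontr)
      assume "\<not> f n (x * t n) < 1"
      then have "x \<in> S n" using True that cc_lo[of n] by (auto simp: S_def)
      then have "x \<le> cc n" unfolding cc_def by (rule cSup_upper[OF _ bddS])
      then show False using that by simp
    qed
  next
    case False
    have "f n (x * t n) \<le> f n (B * t n)"
      using anti[of "B * t n" "x * t n" n] False Bpos tpos[of n] by (simp add: less_imp_le)
    then show ?thesis using that by simp
  qed
  show ?thesis
  proof (intro exI[of _ "\<lambda>n. cc n * t n"] conjI allI impI)
    show "0 < cc n * t n" for n using ccpos tpos by simp
  next
    fix a :: real assume a: "1 < a"
    define D where "D = a * B + 1"
    define k where "k = ((a - 1) / 2 * (A / 2)) / D"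
    have "B \<le> a * B" using a Bpos by simp
    then have Dpos: "0 < D" and BD: "B \<le> D" using Bpos unfolding D_def by linarith+
    have kpos: "0 < k" unfolding k_def using a A0 Dpos by simp
    have g0: "(\<lambda>n. f n (D * t n)) \<longlonglongrightarrow> 0"
    proof (rule tendsto_sandwich[OF _ _ tendsto_const limB])
      show "eventually (\<lambda>n. 0 \<le> f n (D * t n)) sequentially"
        using nonneg tpos Dpos by (simp add: less_imp_le)
      show "eventually (\<lambda>n. f n (D * t n) \<le> f n (B * t n)) sequentially"
        using anti tpos Bpos BD by (simp add: less_imp_le)
    qed
    have gk: "(\<lambda>n. f n (D * t n) powr k) \<longlonglongrightarrow> 0"
      by (rule tendsto_zero_powrI[OF g0 tendsto_const _ kpos]) (use nonneg tpos Dpos in \<open>simp add: less_imp_le\<close>)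
    show "(\<lambda>n. f n (a * (cc n * t n))) \<longlonglongrightarrow> 0"
    proof (rule tendsto_sandwich[OF _ _ tendsto_const gk])
      show "eventually (\<lambda>n. 0 \<le> f n (a * (cc n * t n))) sequentially"
        using nonneg tpos ccpos a by (simp add: less_imp_le)
      show "eventually (\<lambda>n. f n (a * (cc n * t n)) \<le> f n (D * t n) powr k) sequentially"
        using E2
      proof eventually_elim
        case (elim n)
        define x where "x = a * cc n"
        define y where "y = (1 + a) / 2 * cc n"
        define th where "th = (D - x) / (D - y)"
        have c1: "A / 2 \<le> cc n" "cc n \<le> B" "0 < cc n" using cc_lo cc_hi ccpos by auto
        have xy: "y < x" unfolding x_def y_def using c1 a by (simp add: field_simps)
        have "x \<le> a * B" unfolding x_def using c1 a by simp
        then have xD: "x < D" unfolding D_def by simp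
        have th: "0 < th" "th < 1" unfolding th_def using xy xD by (auto simp: field_simps)
        have "th * (D - y) = D - x" unfolding th_def using xy xD by simp
        then have xeq: "x = th * y + (1 - th) * D" by (simp add: algebra_simps)
        have eq1: "1 - th = (x - y) / (D - y)" unfolding th_def using xy xD by (simp add: field_simps)
        have ypos: "0 \<le> y" unfolding y_def using c1 a by simp
        have "(x - y) / D \<le> (x - y) / (D - y)"
          using xy xD ypos Dpos by (intro divide_left_mono mult_pos_pos) auto
        then have th1': "(x - y) / D \<le> 1 - th" using eq1 by simp
        have th1: "k \<le> 1 - th"
        proof -
          note h = th1'

          have "x - y = (a - 1) / 2 * cc n" unfolding x_def y_def by (simp add: field_simps)
          moreover have "(a - 1) / 2 * (A / 2) \<le> (a - 1) / 2 * cc n" using c1 a by simp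
          ultimately have "(a - 1) / 2 * (A / 2) \<le> x - y" by linarith
          then have "k \<le> (x - y) / D" unfolding k_def using Dpos by (intro divide_right_mono) auto
          then show ?thesis using h by linarith
        qed
        have "cc n < y" unfolding y_def using c1 a by (simp add: field_simps)
        then have fy: "f n (y * t n) < 1" using above[OF elim] by blast
        have fD: "f n (D * t n) \<le> 1"
          using anti[of "B * t n" "D * t n" n] BD Bpos tpos[of n] elim by simp
        have fDnn: "0 \<le> f n (D * t n)" using nonneg tpos Dpos by (simp add: less_imp_le)
        have fynn: "0 \<le> f n (y * t n)" using nonneg[of "y * t n" n] tpos[of n] ypos by simp
        have "f n (x * t n) \<le> f n (y * t n) powr th * f n (D * t n) powr (1 - th)"
          by (rule lc'[OF ypos _ th xeq]) (use Dpos in simp)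
        also have "\<dots> \<le> 1 * f n (D * t n) powr (1 - th)"
          by (rule mult_right_mono) (use powr_le1 fy fynn th in auto)
        also have "\<dots> \<le> f n (D * t n) powr k"
          using powr_mono'[OF th1 fDnn fD] by simp
        finally show ?case unfolding x_def by (simp add: mult.assoc)
      qed
    qed
  next
    fix a :: real assume a: "0 < a \<and> a < 1"
    define D where "D = B + 1"
    define k where "k = ((1 - a) / 2 * (A / 2)) / D"
    have Dpos: "0 < D" and BD: "B \<le> D" using Bpos unfolding D_def by auto
    have kpos: "0 < k" unfolding k_def using a A0 Dpos by simp
    have g0: "(\<lambda>n. f n (D * t n)) \<longlonglongrightarrow> 0"
    proof (rule tendsto_sandwich[OF _ _ tendsto_const limB])
      show "eventually (\<lambda>n. 0 \<le> f n (D * t n)) sequentially"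
        using nonneg tpos Dpos by (simp add: less_imp_le)
      show "eventually (\<lambda>n. f n (D * t n) \<le> f n (B * t n)) sequentially"
        using anti tpos Bpos BD by (simp add: less_imp_le)
    qed
    show "filterlim (\<lambda>n. f n (a * (cc n * t n))) at_top sequentially"
    proof (rule blowup[OF g0 _ _ kpos zero_less_one])
      show "eventually (\<lambda>n. 0 \<le> f n (D * t n)) sequentially"
        using nonneg tpos Dpos by (simp add: less_imp_le)
      show "eventually (\<lambda>n. 0 \<le> f n (a * (cc n * t n))) sequentially"
        using nonneg tpos ccpos a by (simp add: less_imp_le)
      show "eventually (\<lambda>n. \<exists>th\<ge>0. th \<le> 1 \<and> 1 \<le> f n (a * (cc n * t n)) powr th * f n (D * t n) powr k) sequentially"
        using E1 E2
      proof eventually_elim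
        case (elim n)
        define x where "x = a * cc n"
        define y where "y = (1 + a) / 2 * cc n"
        define th where "th = (D - y) / (D - x)"
        have c1: "A / 2 \<le> cc n" "cc n \<le> B" "0 < cc n" using cc_lo cc_hi ccpos by auto
        have xy: "x < y" unfolding x_def y_def using c1 a by (simp add: field_simps)
        have yc: "y < cc n" unfolding y_def using c1 a by (simp add: field_simps)
        have yD: "y < D" using yc c1 unfolding D_def by simp
        have xpos: "0 \<le> x" unfolding x_def using c1 a by simp
        have th: "0 < th" "th < 1" unfolding th_def using xy yD by (auto simp: field_simps)
        have "th * (D - x) = D - y" unfolding th_def using xy yD by simp
        then have yeq: "y = th * x + (1 - th) * D" by (simp add: algebra_simps)
        have eq1: "1 - th = (y - x) / (D - x)" unfolding th_def using xy yD by (simp add: field_simps)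
        have "(y - x) / D \<le> (y - x) / (D - x)"
          using xy yD xpos Dpos by (intro divide_left_mono mult_pos_pos) auto
        then have th1': "(y - x) / D \<le> 1 - th" using eq1 by simp
        have th1: "k \<le> 1 - th"
        proof -
          note h = th1'

          have "y - x = (1 - a) / 2 * cc n" unfolding x_def y_def by (simp add: field_simps)
          moreover have "(1 - a) / 2 * (A / 2) \<le> (1 - a) / 2 * cc n" using c1 a by simp
          ultimately have "(1 - a) / 2 * (A / 2) \<le> y - x" by linarith
          then have "k \<le> (y - x) / D" unfolding k_def using Dpos by (intro divide_right_mono) auto
          then show ?thesis using h by linarith
        qed
        have ypos: "0 \<le> y" using xpos xy by simp
        have fy: "1 \<le> f n (y * t n)" using below[OF elim(1) ypos yc] .
        have fD: "f n (D * t n) \<le> 1"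
          using anti[of "B * t n" "D * t n" n] BD Bpos tpos[of n] elim by simp
        have fDnn: "0 \<le> f n (D * t n)" using nonneg tpos Dpos by (simp add: less_imp_le)
        have fxnn: "0 \<le> f n (x * t n)" using nonneg[of "x * t n" n] tpos[of n] xpos by simp
        have "1 \<le> f n (x * t n) powr th * f n (D * t n) powr (1 - th)"
          using fy lc'[OF xpos _ th yeq, of n] Dpos by simp
        also have "\<dots> \<le> f n (x * t n) powr th * f n (D * t n) powr k"
          by (rule mult_left_mono) (use powr_mono'[OF th1 fDnn fD] in auto)
        finally show ?case unfolding x_def using th by (intro exI[of _ th]) (simp add: mult.assoc)
      qed
    qed
  qed
qed

lemma classV_nonneg:
  assumes "classV V" "0 < x" shows "0 \<le> V x"
proof -
  have m: "mono_on {0<..} V" and l: "(V \<longlongrightarrow> 0) (at_right 0)" using assms(1) unfolding classV_def by auto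
  have "eventually (\<lambda>y. V y \<le> V x) (at_right 0)"
    unfolding eventually_at_right_field using assms(2)
    by (intro exI[of _ x]) (auto intro: mono_onD[OF m])
  then show ?thesis by (rule tendsto_upperbound[OF l]) simp
qed

lemma classV_mono: assumes "classV V" shows "mono (extV V)"
proof (rule monoI)
  fix x y :: real assume "x \<le> y"
  have m: "mono_on {0<..} V" using assms unfolding classV_def by auto
  show "extV V x \<le> extV V y"
    using \<open>x \<le> y\<close> classV_nonneg[OF assms, of y] mono_onD[OF m, of x y]
    by (auto simp: extV_def)
qed

lemma classV_rcont: assumes "classV V" shows "continuous (at_right a) (extV V)"
proof -
  have rc: "\<And>x. 0 < x \<Longrightarrow> continuous (at_right x) V" and l: "(V \<longlongrightarrow> 0) (at_right 0)"
    using assms unfolding classV_def by auto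
  consider "0 < a" | "a = 0" | "a < 0" by linarith
  then show ?thesis
  proof cases
    case 1
    have "((\<lambda>x. V x) \<longlongrightarrow> V a) (at_right a)" using rc[OF 1] by (simp add: continuous_within)
    moreover have "eventually (\<lambda>x. V x = extV V x) (at_right a)"
      unfolding eventually_at_right_field using 1 by (auto simp: extV_def intro!: exI[of _ "a+1"])
    ultimately have "(extV V \<longlongrightarrow> V a) (at_right a)" by (rule Lim_transform_eventually)
    then show ?thesis using 1 by (simp add: continuous_within extV_def)
  next
    case 2
    have "eventually (\<lambda>x. V x = extV V x) (at_right a)"
      unfolding eventually_at_right_field using 2 by (auto simp: extV_def intro!: exI[of _ "a+1"])
    then have "(extV V \<longlongrightarrow> 0) (at_right a)" using l 2 by (rule_tac Lim_transform_eventually) auto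
    then show ?thesis using 2 by (simp add: continuous_within extV_def)
  next
    case 3
    have "eventually (\<lambda>x. 0 = extV V x) (at_right a)"
      unfolding eventually_at_right_field using 3 by (auto simp: extV_def intro!: exI[of _ 0])
    then have "(extV V \<longlongrightarrow> 0) (at_right a)" by (rule_tac Lim_transform_eventually) auto
    then show ?thesis using 3 by (simp add: continuous_within extV_def)
  qed
qed

lemma classV_finite:
  assumes "classV V" shows "emeasure (interval_measure (extV V)) {0<..} < \<infinity>"
proof -
  let ?M = "interval_measure (extV V)"
  obtain L where L: "(V \<longlongrightarrow> L) at_top" using assms unfolding classV_def by auto
  have m: "mono_on {0<..} V" using assms unfolding classV_def by auto
  have VL: "V x \<le> L" if "0 < x" for x
  proof -
    have "eventually (\<lambda>y. V x \<le> V y) at_top"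
      unfolding eventually_at_top_linorder using that by (intro exI[of _ x]) (auto intro: mono_onD[OF m])
    then show ?thesis by (rule tendsto_lowerbound[OF L]) simp
  qed
  have U: "(\<Union>k. {0<..real k}) = {0<..}" by (auto intro: real_arch_simple)
  have "emeasure ?M {0<..} = (SUP k. emeasure ?M {0<..real k})"
    by (subst SUP_emeasure_incseq) (auto simp: U incseq_def)
  also have "\<dots> \<le> ennreal L"
  proof (rule SUP_least)
    fix k :: nat
    have "emeasure ?M {0<..real k} = ennreal (extV V (real k) - extV V 0)"
      by (rule emeasure_interval_measure_Ioc) (auto intro: monoD[OF classV_mono[OF assms]] classV_rcont[OF assms])
    also have "\<dots> \<le> ennreal L"
      using VL[of "real k"] VL[of 1] classV_nonneg[OF assms, of 1] by (intro ennreal_leI) (auto simp: extV_def)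
    finally show "emeasure ?M {0<..real k} \<le> ennreal L" .
  qed
  finally show ?thesis by (simp add: le_less_trans)
qed

definition I :: "real \<Rightarrow> real \<Rightarrow> real" where "I s x = indicator {0<..} x * exp (- s * x)"

lemma I_meas[measurable]: "I s \<in> borel_measurable (interval_measure F)"
  unfolding I_def by measurable

lemma LT_I: "LT V s = integral\<^sup>L (interval_measure (extV V)) (I s)"
  unfolding LT_def set_lebesgue_integral_def I_def by simp

lemma I_integrable:
  assumes "classV V" "0 \<le> s" shows "integrable (interval_measure (extV V)) (I s)"
proof -
  have 1: "integrable (interval_measure (extV V)) (indicator {0<..} :: real \<Rightarrow> real)"
    using classV_finite[OF assms(1)] by (intro integrable_real_indicator) auto
  have 2: "AE x in interval_measure (extV V). norm (I s x) \<le> norm (indicator {0<..} x :: real)"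
    using assms(2) by (auto simp: I_def indicator_def mult_nonneg_nonpos)
  show ?thesis by (rule Bochner_Integration.integrable_bound[OF 1 I_meas 2])
qed

lemma I_nonneg: "0 \<le> I s x" by (simp add: I_def)

lemma LT_nonneg: "0 \<le> LT V s"
  unfolding LT_I by (rule integral_nonneg_AE) (simp add: I_nonneg)

lemma LT_anti: assumes "classV V" "0 \<le> s" "s \<le> s'" shows "LT V s' \<le> LT V s"
  unfolding LT_I
proof (rule integral_mono)
  show "integrable (interval_measure (extV V)) (I s')" "integrable (interval_measure (extV V)) (I s)"
    using assms by (auto intro: I_integrable)
  fix x show "I s' x \<le> I s x" using assms(3) by (auto simp: I_def indicator_def mult_right_mono)
qed

lemma LT_zero:
  assumes "classV V" "0 \<le> s" "LT V s = 0" shows "LT V s' = 0"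
proof -
  let ?M = "interval_measure (extV V)"
  have "AE x in ?M. I s x = 0"
    using assms(3) integral_nonneg_eq_0_iff_AE[OF I_integrable[OF assms(1,2)]] by (simp add: LT_I I_nonneg)
  then have "AE x in ?M. I s' x = 0"
    by eventually_elim (auto simp: I_def indicator_def split: if_splits)
  then have "integral\<^sup>L ?M (I s') = integral\<^sup>L ?M (\<lambda>x. 0)"
    by (intro integral_cong_AE) auto
  then show ?thesis by (simp add: LT_I)
qed

lemma LT_lc:
  assumes V: "classV V" and s: "0 \<le> s1" "0 \<le> s2" and th: "0 < th" "th < 1"
  shows "LT V (th * s1 + (1 - th) * s2) \<le> LT V s1 powr th * LT V s2 powr (1 - th)"
proof (cases "LT V s1 = 0 \<or> LT V s2 = 0")
  case True
  then have "LT V (th * s1 + (1 - th) * s2) = 0" using LT_zero[OF V] s by blast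
  then show ?thesis by simp
next
  case False
  let ?M = "interval_measure (extV V)"
  define X where "X = LT V s1"
  define Y where "Y = LT V s2"
  define C where "C = X powr th * Y powr (1 - th)"
  have X: "0 < X" and Y: "0 < Y" using False LT_nonneg[of V] unfolding X_def Y_def
    by (metis less_eq_real_def)+
  have pw: "I (th * s1 + (1 - th) * s2) x \<le> C * (th / X * I s1 x + (1 - th) / Y * I s2 x)" for x
  proof (cases "0 < x")
    case True
    define p where "p = - s1 * x - ln X"
    define q where "q = - s2 * x - ln Y"
    have cv: "exp (th * p + (1 - th) * q) \<le> th * exp p + (1 - th) * exp q"
      using convex_onD[OF exp_convex, of "1 - th" p q] th by (simp add: algebra_simps)
    have e1: "exp (- (th * s1 + (1 - th) * s2) * x) = C * exp (th * p + (1 - th) * q)"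
      unfolding C_def p_def q_def powr_def using X Y
      by (simp add: exp_add[symmetric] algebra_simps)
    have "exp p = exp (- s1 * x) / X" unfolding p_def using X by (simp add: exp_diff)
    moreover have "exp q = exp (- s2 * x) / Y" unfolding q_def using Y by (simp add: exp_diff)
    moreover have "0 \<le> C" unfolding C_def by simp
    ultimately show ?thesis using True e1 cv
      by (simp add: I_def mult_left_mono)
  next
    case False
    then show ?thesis by (simp add: I_def)
  qed
  have i1: "integrable ?M (I s1)" and i2: "integrable ?M (I s2)"
    using I_integrable[OF V] s by auto
  have "LT V (th * s1 + (1 - th) * s2) \<le> integral\<^sup>L ?M (\<lambda>x. C * (th / X * I s1 x + (1 - th) / Y * I s2 x))"
    unfolding LT_I
    by (rule integral_mono) (use I_integrable[OF V] s th i1 i2 pw in auto)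
  also have "\<dots> = C * (th / X * X + (1 - th) / Y * Y)"
    using i1 i2 by (simp add: X_def Y_def LT_I)
  also have "\<dots> = C" using X Y by simp
  finally show ?thesis unfolding C_def X_def Y_def .
qed

lemma ereal_to_inf:
  fixes g :: "nat \<Rightarrow> real"
  assumes "filterlim g at_top sequentially"
  shows "(\<lambda>n. ereal (g n)) \<longlonglongrightarrow> \<infinity>"
  unfolding tendsto_PInfty
proof
  fix r :: real
  have "eventually (\<lambda>n. r < g n) sequentially"
    using assms by (simp add: filterlim_at_top_dense)
  then show "eventually (\<lambda>n. ereal r < ereal (g n)) sequentially" by simp
qed

theorem theorem2p1:
  fixes V :: "nat \<Rightarrow> real \<Rightarrow> real"
  assumes "\<And>n. classV (V n)"
    and "limsup (\<lambda>n. ereal (LT (V n) 0)) > 0"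
  shows "pre_cutoff V \<longleftrightarrow> cutoff V"
proof
  assume "pre_cutoff V"
  then obtain t A B where t: "\<forall>n. 0 < t n" and AB: "0 < A" "A < B"
    and limB: "(\<lambda>n. LT (V n) (B * t n)) \<longlonglongrightarrow> 0"
    and li: "liminf (\<lambda>n. ereal (LT (V n) (A * t n))) > 0"
    unfolding pre_cutoff_def by blast
  obtain c where c: "0 < ereal c" "ereal c < liminf (\<lambda>n. ereal (LT (V n) (A * t n)))"
    using ereal_dense2[OF li] by blast
  have evc: "eventually (\<lambda>n. c \<le> LT (V n) (A * t n)) sequentially"
    using less_LiminfD[OF c(2)] by eventually_elim simp
  have "\<exists>t'. (\<forall>n. 0 < t' n) \<and> (\<forall>a>1. (\<lambda>n. LT (V n) (a * t' n)) \<longlonglongrightarrow> 0) \<and>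
     (\<forall>a. 0 < a \<and> a < 1 \<longrightarrow> filterlim (\<lambda>n. LT (V n) (a * t' n)) at_top sequentially)"
  proof (rule abstract_main[where f = "\<lambda>n. LT (V n)", OF _ _ _ _ AB limB _ evc])
    show "0 \<le> LT (V n) s" for n s by (rule LT_nonneg)
    show "LT (V n) s' \<le> LT (V n) s" if "0 \<le> s" "s \<le> s'" for n s s'
      using LT_anti[OF assms(1)] that by blast
    show "LT (V n) (th * s1 + (1 - th) * s2) \<le> LT (V n) s1 powr th * LT (V n) s2 powr (1 - th)"
      if "0 \<le> s1" "0 \<le> s2" "0 < th" "th < 1" for n s1 s2 th
      using LT_lc[OF assms(1) that] .
    show "0 < t n" for n using t by blast
    show "0 < c" using c by simp
  qed
  then obtain t' where t': "\<forall>n. 0 < t' n" "\<forall>a>1. (\<lambda>n. LT (V n) (a * t' n)) \<longlonglongrightarrow> 0"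
    "\<And>a. 0 < a \<Longrightarrow> a < 1 \<Longrightarrow> filterlim (\<lambda>n. LT (V n) (a * t' n)) at_top sequentially"
    by blast
  have "filterlim (\<lambda>n. LT (V n) 0) at_top sequentially"
  proof (rule filterlim_at_top_mono[OF t'(3)[of "1/2"]])
    show "eventually (\<lambda>n. LT (V n) (1 / 2 * t' n) \<le> LT (V n) 0) sequentially"
      using LT_anti[OF assms(1)] t'(1) by (simp add: less_imp_le)
  qed auto
  then have "limsup (\<lambda>n. ereal (LT (V n) 0)) = \<infinity>"
    by (intro lim_imp_Limsup ereal_to_inf) auto
  then show "cutoff V" unfolding cutoff_def
    using t' ereal_to_inf by (intro exI[of _ t']) auto
next
  assume "cutoff V"
  then obtain t where t: "\<forall>n. 0 < t n" "\<forall>a>1. (\<lambda>n. LT (V n) (a * t n)) \<longlonglongrightarrow> 0"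
    "\<forall>a. 0 < a \<and> a < 1 \<longrightarrow> (\<lambda>n. ereal (LT (V n) (a * t n))) \<longlonglongrightarrow> limsup (\<lambda>n. ereal (LT (V n) 0))"
    unfolding cutoff_def by blast
  have "liminf (\<lambda>n. ereal (LT (V n) (1 / 2 * t n))) = limsup (\<lambda>n. ereal (LT (V n) 0))"
    using t(3)[rule_format, of "1/2"] by (intro lim_imp_Liminf) auto
  then show "pre_cutoff V" unfolding pre_cutoff_def using t(1,2) assms(2)
    by (intro exI[of _ t] exI[of _ "1/2"] exI[of _ 2]) auto
qed

end
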